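(* Let $D$ be the contamination divergence and $\eta\in(0,1)$. Suppose the cumulative distribution function $F$ of the reference belief $P$ is absolutely continuous with density $f>0$ on $\Theta$, and that $\theta\mapsto\theta-\frac{1-F(\theta)}{f(\theta)}$ is strictly increasing. Let $r^*:=\sup\{\theta:\theta-\frac{1-F(\theta)}{f(\theta)}\le0\}$ and define $x^*_i(\theta,\theta')=1$ if $\theta>\theta'$ and $\theta\ge r^*$; $=1/2$ if $\theta=\theta'$ and $\theta\ge r^*$; $=0$ otherwise. Then $x^*$ solves the Optimal Allocation Problem (A): $$\sup_x\Big\{\sum_{i=1}^2\int_\Theta\Big[\theta X_i(\theta)-\int_{\underline\theta}^{\theta}X_i(z)\,dz\Big]dP(\theta):\ x\text{ is an allocation rule satisfying Assumption X}\Big\}.$$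
   Context: $\Theta=[\underline\theta,\bar\theta]$ with $0<\underline\theta<\bar\theta$, Borel $\sigma$-algebra $\mathcal{B}$; $P\in\Delta(\Theta,\mathcal{B})$ is atomless; $\Delta(\Theta,\mathcal{B})$ denotes the probability measures on $(\Theta,\mathcal{B})$. The contamination divergence: $D(Q\|P)=\operatorname{ess\,sup}_P(1-\frac{dQ}{dP})$ if $Q\ll P$, and $+\infty$ otherwise. Two bidders $i\in\{1,2\}$. An allocation rule is a bounded measurable $x=(x_1,x_2):\Theta^2\to\mathbb{R}^2$ with $x_1(\theta,\theta')\ge0$, $x_2(\theta',\theta)\ge0$, $x_1(\theta,\theta')+x_2(\theta',\theta)\le1$ for all $\theta,\theta'$. $X_i(\theta)=\int x_i(\theta,\theta')dP(\theta')$ and $X_i^{\min}(\theta)=\inf\{\int x_i(\theta,\theta')dQ(\theta'):Q\in\Delta(\Theta,\mathcal{B}),D(Q\|P)\le\eta\}$. Assumption X: (i) $x_i(\theta,\theta')\in\{0,1\}$ for $\theta'\ne\theta$; (ii) $X_i(\theta)=1$ implies $\theta=\bar\theta$; (iii) $X_i^{\min}$ is non-decreasing. *)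

theory Defs
  imports "HOL-Probability.Probability"
begin

text \<open>Type space Theta = [a, b]; the reference belief P is a probability measure
  on the Borel sets of [a, b]. Bidders are indexed by 1 and 2; an allocation rule is
  x :: nat => real => real => real, where x i t t' is bidder i's allocation when
  bidder i has type t and the opponent has type t'.\<close>

definition atomless :: "'a measure \<Rightarrow> bool" where
  "atomless M \<longleftrightarrow> (\<forall>A\<in>sets M. 0 < measure M A \<longrightarrow>
      (\<exists>B\<in>sets M. B \<subseteq> A \<and> 0 < measure M B \<and> measure M B < measure M A))"

definition contamination_div :: "'a measure \<Rightarrow> 'a measure \<Rightarrow> ereal" where
  "contamination_div Q P =
     (if absolutely_continuous P Q
      then esssup P (\<lambda>t. ereal 1 - enn2ereal (RN_deriv P Q t))
      else \<infinity>)"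

definition allocation_rule :: "real \<Rightarrow> real \<Rightarrow> (nat \<Rightarrow> real \<Rightarrow> real \<Rightarrow> real) \<Rightarrow> bool" where
  "allocation_rule a b x \<longleftrightarrow>
     (\<forall>i\<in>{1,2::nat}.
        (\<lambda>(t, t'). x i t t') \<in> borel_measurable
            (restrict_space borel {a..b} \<Otimes>\<^sub>M restrict_space borel {a..b})
      \<and> (\<exists>B. \<forall>t\<in>{a..b}. \<forall>t'\<in>{a..b}. \<bar>x i t t'\<bar> \<le> B))
   \<and> (\<forall>t\<in>{a..b}. \<forall>t'\<in>{a..b}.
        0 \<le> x 1 t t' \<and> 0 \<le> x 2 t' t \<and> x 1 t t' + x 2 t' t \<le> 1)"

definition interim :: "real measure \<Rightarrow> (nat \<Rightarrow> real \<Rightarrow> real \<Rightarrow> real) \<Rightarrow> nat \<Rightarrow> real \<Rightarrow> real" where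
  "interim P x i t = (\<integral>t'. x i t t' \<partial>P)"

definition interim_min :: "real measure \<Rightarrow> real \<Rightarrow> (nat \<Rightarrow> real \<Rightarrow> real \<Rightarrow> real) \<Rightarrow> nat \<Rightarrow> real \<Rightarrow> real" where
  "interim_min P \<eta> x i t =
     Inf {(\<integral>t'. x i t t' \<partial>Q) | Q. sets Q = sets P \<and> prob_space Q
                                  \<and> contamination_div Q P \<le> ereal \<eta>}"

definition assumption_X :: "real \<Rightarrow> real \<Rightarrow> real measure \<Rightarrow> real \<Rightarrow> (nat \<Rightarrow> real \<Rightarrow> real \<Rightarrow> real) \<Rightarrow> bool" where
  "assumption_X a b P \<eta> x \<longleftrightarrow>
     (\<forall>i\<in>{1,2::nat}.
        (\<forall>t\<in>{a..b}. \<forall>t'\<in>{a..b}. t' \<noteq> t \<longrightarrow> x i t t' \<in> {0, 1})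
      \<and> (\<forall>t\<in>{a..b}. interim P x i t = 1 \<longrightarrow> t = b)
      \<and> mono_on {a..b} (interim_min P \<eta> x i))"

definition revenue :: "real \<Rightarrow> real measure \<Rightarrow> (nat \<Rightarrow> real \<Rightarrow> real \<Rightarrow> real) \<Rightarrow> real" where
  "revenue a P x =
     (\<Sum>i\<in>{1,2::nat}. \<integral>t. (t * interim P x i t
                              - (LINT z:{a..t}|lborel. interim P x i z)) \<partial>P)"

definition virtual_value :: "(real \<Rightarrow> real) \<Rightarrow> (real \<Rightarrow> real) \<Rightarrow> real \<Rightarrow> real" where
  "virtual_value F f t = t - (1 - F t) / f t"

text \<open>r* = sup {t in Theta : virtual value <= 0}; the point a is added so that
  the empty set yields r* = a (equivalent to the convention sup {} = -infinity here).\<close>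
definition reserve :: "real \<Rightarrow> real \<Rightarrow> (real \<Rightarrow> real) \<Rightarrow> (real \<Rightarrow> real) \<Rightarrow> real" where
  "reserve a b F f = Sup ({a} \<union> {t\<in>{a..b}. virtual_value F f t \<le> 0})"

definition x_star :: "real \<Rightarrow> nat \<Rightarrow> real \<Rightarrow> real \<Rightarrow> real" where
  "x_star r i t t' =
     (if t > t' \<and> t \<ge> r then 1 else if t = t' \<and> t \<ge> r then 1/2 else 0)"

end

theory Submission
  imports Defs
begin


locale setting =
  fixes a b :: real and P :: "real measure" and f :: "real \<Rightarrow> real"
  assumes ab: "a < b"
    and sets_P[measurable_cong]: "sets P = sets (restrict_space borel {a..b})"
    and prob: "prob_space P"
    and f_int: "set_integrable lborel {a..b} f"
    and f_pos: "\<forall>t\<in>{a..b}. 0 < f t"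
    and F_eq: "\<forall>t\<in>{a..b}. measure P {a..t} = (LINT z:{a..t}|lborel. f z)"
    and phi_mono: "strict_mono_on {a..b} (virtual_value (\<lambda>t. measure P {a..t}) f)"
begin

definition g :: "real \<Rightarrow> real" where "g x = indicator {a..b} x * f x"

lemma space_P: "space P = {a..b}"
  using sets_eq_imp_space_eq[OF sets_P] by simp

lemma g_int: "integrable lborel g"
  using f_int unfolding set_integrable_def g_def by simp

lemma g_meas[measurable]: "g \<in> borel_measurable borel"
  using borel_measurable_integrable[OF g_int] by simp

lemma g_nonneg: "0 \<le> g x"
  using f_pos unfolding g_def by (auto simp: indicator_def less_imp_le)

lemma f_meas: "f \<in> borel_measurable P"
proof -
  have "f \<in> borel_measurable (restrict_space borel {a..b})"
    by (subst borel_measurable_restrict_space_iff) (use g_meas[unfolded g_def] in \<open>auto\<close>)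
  then show ?thesis by (simp add: measurable_cong_sets[OF sets_P refl])
qed

lemma id_meas: "(\<lambda>x. x) \<in> measurable P borel"
  by (simp add: measurable_cong_sets[OF sets_P refl] measurable_restrict_space1)

definition M1 where "M1 = distr P borel (\<lambda>x. x)"
definition M2 where "M2 = density lborel g"

lemma meas_P_atMost: "measure P ({..t} \<inter> {a..b}) = (LINT z:({..t} \<inter> {a..b})|lborel. f z)"
proof (cases "t < a")
  case True
  then have "{..t} \<inter> {a..b} = {}" by auto
  then show ?thesis by (simp add: set_lebesgue_integral_def)
next
  case False
  show ?thesis
  proof (cases "t \<le> b")
    case True
    then have "{..t} \<inter> {a..b} = {a..t}" using False by auto
    then show ?thesis using F_eq True False by simp
  next
    case False
    then have "{..t} \<inter> {a..b} = {a..b}" by auto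
    then show ?thesis using F_eq ab by simp
  qed
qed

lemma int_g: "integral\<^sup>L lborel g = 1"
proof -
  have "integral\<^sup>L lborel g = (LINT z:{a..b}|lborel. f z)"
    unfolding g_def set_lebesgue_integral_def by simp
  also have "\<dots> = measure P {a..b}" using F_eq ab by simp
  also have "\<dots> = 1" using prob_space.prob_space[OF prob] space_P by simp
  finally show ?thesis .
qed

lemma rd1: "real_distribution M1"
  unfolding M1_def using prob_space.real_distribution_distr[OF prob] id_meas by simp

lemma rd2: "real_distribution M2"
proof -
  have "emeasure M2 UNIV = 1"
    unfolding M2_def
    by (simp add: emeasure_density nn_integral_eq_integral[OF g_int] g_nonneg int_g)
  then show ?thesis
    unfolding real_distribution_def real_distribution_axioms_def M2_def
    by (auto intro!: prob_spaceI)
qed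

lemma M12: "M1 = M2"
proof (rule cdf_unique[OF rd1 rd2])
  show "cdf M1 = cdf M2"
  proof
    fix t
    have "cdf M1 t = measure P ({..t} \<inter> {a..b})"
      unfolding cdf_def M1_def using id_meas by (simp add: measure_distr space_P)
    also have "\<dots> = (LINT z:({..t} \<inter> {a..b})|lborel. f z)" by (rule meas_P_atMost)
    also have "\<dots> = integral\<^sup>L lborel (\<lambda>x. indicator {..t} x * g x)"
      unfolding set_lebesgue_integral_def g_def
      by (rule Bochner_Integration.integral_cong) (auto simp: indicator_def)
    also have "\<dots> = cdf M2 t"
    proof -
      have "emeasure M2 {..t} = ennreal (integral\<^sup>L lborel (\<lambda>x. indicator {..t} x * g x))"
        unfolding M2_def
        apply (subst emeasure_density, simp, simp)
        apply (subst nn_integral_eq_integral[symmetric])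
          apply (rule Bochner_Integration.integrable_bound[OF g_int]) apply simp apply (simp add: indicator_def g_nonneg)
         apply (simp add: g_nonneg)
        apply (intro nn_integral_cong) apply (auto simp: indicator_def g_nonneg)
        done
      moreover have "0 \<le> integral\<^sup>L lborel (\<lambda>x. indicator {..t} x * g x)"
        by (intro Bochner_Integration.integral_nonneg) (simp add: g_nonneg)
      ultimately show ?thesis unfolding cdf_def measure_def by simp
    qed
    finally show "cdf M1 t = cdf M2 t" .
  qed
qed

lemma transfer:
  assumes h: "h \<in> borel_measurable P"
  shows "integral\<^sup>L P h = integral\<^sup>L lborel (\<lambda>x. g x * h x)
     \<and> (integrable P h \<longleftrightarrow> integrable lborel (\<lambda>x. g x * h x))"
proof -
  define h' where "h' x = indicator {a..b} x * h x" for x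
  have "h \<in> borel_measurable (restrict_space borel {a..b})"
    using h by (simp add: measurable_cong_sets[OF sets_P refl])
  then have hm: "h' \<in> borel_measurable borel"
    unfolding h'_def by (subst (asm) borel_measurable_restrict_space_iff) auto
  have e1: "\<And>x. x \<in> space P \<Longrightarrow> h x = h' x" by (simp add: h'_def space_P)
  have e2: "\<And>x. g x * h x = g x * h' x" by (simp add: h'_def g_def indicator_def)
  have "integral\<^sup>L P h = integral\<^sup>L P h'" by (rule Bochner_Integration.integral_cong[OF refl e1])
  also have "\<dots> = integral\<^sup>L M1 h'" unfolding M1_def by (simp add: integral_distr[OF id_meas hm])
  also have "\<dots> = integral\<^sup>L lborel (\<lambda>x. g x * h' x)"
    unfolding M12 M2_def by (subst integral_density) (auto simp: hm g_nonneg)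
  finally have I: "integral\<^sup>L P h = integral\<^sup>L lborel (\<lambda>x. g x * h x)" by (simp add: e2)
  have "integrable P h \<longleftrightarrow> integrable P h'" by (rule Bochner_Integration.integrable_cong[OF refl e1])
  also have "\<dots> \<longleftrightarrow> integrable M1 h'" unfolding M1_def by (simp add: integrable_distr_eq[OF id_meas hm])
  also have "\<dots> \<longleftrightarrow> integrable lborel (\<lambda>x. g x * h' x)"
    unfolding M12 M2_def by (subst integrable_density) (auto simp: hm g_nonneg)
  finally show ?thesis using I by (simp add: e2)
qed

lemma point0: "measure P {t} = 0"
proof (cases "t \<in> {a..b}")
  case True
  have "{t} \<in> sets P" using True by (simp add: sets_P sets_restrict_space_iff)
  have m: "indicator {t} \<in> borel_measurable P"
    using \<open>{t} \<in> sets P\<close> by simp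
  have "measure P {t} = integral\<^sup>L P (indicator {t})"
    using \<open>{t} \<in> sets P\<close> finite_measure.emeasure_finite[OF prob_space.finite_measure[OF prob]]
    by (simp add: less_top)
  also have "\<dots> = integral\<^sup>L lborel (\<lambda>x. g x * indicator {t} x)" using transfer[OF m] by simp
  also have "\<dots> = integral\<^sup>L lborel (\<lambda>x. g t * indicator {t} x)"
    by (rule Bochner_Integration.integral_cong) (auto simp: indicator_def)
  also have "\<dots> = 0" by simp
  finally show ?thesis .
next
  case False
  then have "{t} \<notin> sets P" using sets.sets_into_space space_P by blast
  then show ?thesis by (simp add: measure_notin_sets)
qed

definition Fm :: "real \<Rightarrow> real" where "Fm t = measure P ({..t} \<inter> {a..b})"

lemma Fm_mono: "mono Fm"
proof
  fix x y :: real assume "x \<le> y"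
  have "{..x} \<inter> {a..b} \<in> sets P" "{..y} \<inter> {a..b} \<in> sets P"
    by (simp_all add: sets_P sets_restrict_space_iff)
  then show "Fm x \<le> Fm y" unfolding Fm_def using \<open>x \<le> y\<close>
    by (intro finite_measure.finite_measure_mono[OF prob_space.finite_measure[OF prob]]) auto
qed

lemma Fm_meas[measurable]: "Fm \<in> borel_measurable borel"
  by (rule borel_measurable_mono[OF Fm_mono])

lemma Fm_bounds: "0 \<le> Fm t" "Fm t \<le> 1"
  unfolding Fm_def using prob_space.prob_le_1[OF prob] by auto

lemma Fm_eq: "t \<in> {a..b} \<Longrightarrow> Fm t = measure P {a..t}"
  unfolding Fm_def by (rule arg_cong[where f="measure P"]) auto

abbreviation F where "F \<equiv> (\<lambda>t. measure P {a..t})"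
abbreviation phi where "phi \<equiv> virtual_value F f"

lemma phi_eq: "t \<in> {a..b} \<Longrightarrow> phi t = t - (1 - Fm t) / f t"
  by (simp add: virtual_value_def Fm_eq)

lemma phi_meas[measurable]: "phi \<in> borel_measurable P"
proof -
  have "(\<lambda>t. t - (1 - Fm t) / f t) \<in> borel_measurable P"
    using f_meas id_meas by measurable
  then show ?thesis
    by (rule measurable_cong[THEN iffD1, rotated]) (simp add: phi_eq space_P)
qed

lemma phi_int: "integrable P phi"
proof -
  have "integrable lborel (\<lambda>x. g x * phi x)"
  proof -
    have eq: "g x * phi x = x * g x - indicator {a..b} x * (1 - Fm x)" for x
    proof (cases "x \<in> {a..b}")
      case True
      then have "f x \<noteq> 0" using f_pos by force
      then show ?thesis using True by (simp add: g_def phi_eq field_simps)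
    qed (simp add: g_def)
    have i1: "integrable lborel (\<lambda>x. x * g x)"
    proof (rule Bochner_Integration.integrable_bound[of _ "\<lambda>x. (\<bar>a\<bar> + \<bar>b\<bar>) * g x"])
      show "integrable lborel (\<lambda>x. (\<bar>a\<bar> + \<bar>b\<bar>) * g x)" using g_int by simp
      show "(\<lambda>x. x * g x) \<in> borel_measurable lborel" by simp
      show "AE x in lborel. norm (x * g x) \<le> norm ((\<bar>a\<bar> + \<bar>b\<bar>) * g x)"
        using g_nonneg f_pos
        by (auto simp: g_def indicator_def abs_mult intro!: mult_right_mono)
    qed
    have i2: "integrable lborel (\<lambda>x. indicator {a..b} x * (1 - Fm x))"
    proof (rule Bochner_Integration.integrable_bound[of _ "indicator {a..b}"])
      show "integrable lborel (indicator {a..b} :: real \<Rightarrow> real)"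
        by (rule integrable_real_indicator) (use ab in \<open>auto simp: emeasure_lborel_Icc\<close>)
      show "(\<lambda>x. indicator {a..b} x * (1 - Fm x)) \<in> borel_measurable lborel" by simp
      show "AE x in lborel. norm (indicator {a..b} x * (1 - Fm x)) \<le> norm (indicator {a..b} x :: real)"
        using Fm_bounds by (auto simp: indicator_def)
    qed
    show ?thesis unfolding eq using i1 i2 by simp
  qed
  then show ?thesis using transfer[OF phi_meas] by simp
qed

lemma fmP: "finite_measure P" by (rule prob_space.finite_measure[OF prob])

lemma PL: "pair_sigma_finite P lborel"
proof -
  interpret prob_space P by (rule prob)
  show ?thesis by unfold_locales
qed

lemma PP: "pair_sigma_finite P P"
proof -
  interpret prob_space P by (rule prob)
  show ?thesis by unfold_locales
qed

lemma measure_ge: "z \<in> {a..b} \<Longrightarrow> measure P {z..b} = 1 - Fm z"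
proof -
  assume z: "z \<in> {a..b}"
  have s1: "{a..<z} \<in> sets P" "{z..b} \<in> sets P" "{z} \<in> sets P"
    using z by (auto simp: sets_P sets_restrict_space_iff)
  have u: "{a..b} = {a..<z} \<union> {z..b}" using z by auto
  have d: "{a..<z} \<inter> {z..b} = {}" by auto
  have "measure P ({a..<z} \<union> {z..b}) = measure P {a..<z} + measure P {z..b}"
    by (rule finite_measure.finite_measure_Union[OF fmP s1(1,2) d])
  then have "1 = measure P {a..<z} + measure P {z..b}"
    using prob_space.prob_space[OF prob] space_P u by simp
  moreover have "{a..z} = {a..<z} \<union> {z}" using z by auto
  then have "measure P {a..z} = measure P {a..<z}"
    using finite_measure.finite_measure_Union[OF fmP s1(1,3)] point0 by auto
  ultimately show ?thesis using Fm_eq[OF z] by simp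
qed

lemma L1:
  assumes Xm: "X \<in> borel_measurable P" and XB: "\<forall>t\<in>{a..b}. \<bar>X t\<bar> \<le> B"
  shows "integral\<^sup>L P (\<lambda>t. t * X t - (LINT z:{a..t}|lborel. X z)) = integral\<^sup>L P (\<lambda>t. X t * phi t)"
proof -
  interpret PLi: pair_sigma_finite P lborel by (rule PL)
  define X' where "X' z = indicator {a..b} z * X z" for z
  have "X \<in> borel_measurable (restrict_space borel {a..b})"
    using Xm by (simp add: measurable_cong_sets[OF sets_P refl])
  then have X'm[measurable]: "X' \<in> borel_measurable borel"
    unfolding X'_def by (subst (asm) borel_measurable_restrict_space_iff) auto
  have B0: "0 \<le> B" using XB ab by force
  have X'B: "\<bar>X' z\<bar> \<le> B" for z using XB B0 by (auto simp: X'_def indicator_def)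
  define K where "K w = (if a \<le> snd w \<and> snd w \<le> fst w then X' (snd w) else 0)" for w :: "real \<times> real"
  have fstm[measurable]: "(\<lambda>w. fst w) \<in> borel_measurable (P \<Otimes>\<^sub>M lborel)"
    using measurable_comp[OF measurable_fst id_meas] by (simp add: o_def)
  have Km[measurable]: "K \<in> borel_measurable (P \<Otimes>\<^sub>M lborel)"
    unfolding K_def by measurable
  have SS: "{a..b} \<times> {a..b} \<in> sets (P \<Otimes>\<^sub>M lborel)"
    by (rule pair_measureI) (auto simp: sets_P sets_restrict_space_iff)
  have Kint: "integrable (P \<Otimes>\<^sub>M lborel) K"
  proof (rule Bochner_Integration.integrable_bound[of _ "\<lambda>w. B * indicator ({a..b} \<times> {a..b}) w"])
    have "emeasure (P \<Otimes>\<^sub>M lborel) ({a..b} \<times> {a..b}) = emeasure P {a..b} * emeasure lborel {a..b}"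
      by (rule lborel.emeasure_pair_measure_Times) (auto simp: sets_P sets_restrict_space_iff)
    also have "\<dots> < \<infinity>" using finite_measure.emeasure_finite[OF fmP] ab
      by (simp add: emeasure_lborel_Icc ennreal_mult_less_top less_top)
    finally show "integrable (P \<Otimes>\<^sub>M lborel) (\<lambda>w. B * indicator ({a..b} \<times> {a..b}) w)"
      using SS by (intro integrable_mult_right integrable_real_indicator) auto
    show "K \<in> borel_measurable (P \<Otimes>\<^sub>M lborel)" by (rule Km)
    show "AE x in P \<Otimes>\<^sub>M lborel. norm (K x) \<le> norm (B * indicator ({a..b} \<times> {a..b}) x)"
      using XB B0 by (intro AE_I2) (auto simp: K_def space_pair_measure space_P indicator_def X'_def)
  qed
  have Ieq: "\<And>t. t \<in> space P \<Longrightarrow> (LINT z:{a..t}|lborel. X z) = (\<integral>z. K (t, z) \<partial>lborel)"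
    unfolding set_lebesgue_integral_def
    by (rule Bochner_Integration.integral_cong) (auto simp: K_def X'_def indicator_def space_P)
  have Iint: "integrable P (\<lambda>t. LINT z:{a..t}|lborel. X z)"
    using PLi.integrable_fst'[OF Kint] Bochner_Integration.integrable_cong[OF refl, of P "\<lambda>t. LINT z:{a..t}|lborel. X z" "\<lambda>t. \<integral>z. K (t, z) \<partial>lborel"] Ieq by simp
  have tXm: "(\<lambda>t. t * X t) \<in> borel_measurable P" using Xm id_meas by measurable
  have tXint: "integrable P (\<lambda>t. t * X t)"
  proof (rule finite_measure.integrable_const_bound[OF fmP, where B="(\<bar>a\<bar> + \<bar>b\<bar>) * B"])
    show "AE x in P. norm (x * X x) \<le> (\<bar>a\<bar> + \<bar>b\<bar>) * B"
      using XB B0 by (intro AE_I2) (auto simp: space_P abs_mult intro!: mult_mono)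
  qed (rule tXm)
  have inner: "(\<integral>t. K (t, z) \<partial>P) = X' z * (1 - Fm z)" for z
  proof (cases "z \<in> {a..b}")
    case True
    have "(\<integral>t. K (t, z) \<partial>P) = (\<integral>t. X' z * indicator {z..b} t \<partial>P)"
      by (rule Bochner_Integration.integral_cong) (use True in \<open>auto simp: K_def space_P indicator_def\<close>)
    also have "\<dots> = X' z * measure P {z..b}"
      using True finite_measure.emeasure_finite[OF fmP]
      by (simp add: sets_P sets_restrict_space_iff less_top)
    finally show ?thesis using measure_ge[OF True] by simp
  next
    case False
    then have "K (t, z) = 0" for t by (auto simp: K_def X'_def)
    then show ?thesis using False by (simp add: X'_def)
  qed
  have int2: "integrable lborel (\<lambda>z. X' z * (1 - Fm z))"
  proof (rule Bochner_Integration.integrable_bound[of _ "\<lambda>z. B * indicator {a..b} z"])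
    show "integrable lborel (\<lambda>z. B * indicator {a..b} z :: real)"
      by (intro integrable_mult_right integrable_real_indicator) (use ab in \<open>auto simp: emeasure_lborel_Icc\<close>)
    show "(\<lambda>z. X' z * (1 - Fm z)) \<in> borel_measurable lborel" by simp
    show "AE x in lborel. norm (X' x * (1 - Fm x)) \<le> norm (B * indicator {a..b} x :: real)"
    proof (intro AE_I2)
      fix x :: real
      have hlp: "\<bar>u\<bar> * v \<le> B" if "\<bar>u\<bar> \<le> B" "0 \<le> v" "v \<le> 1" for u v :: real
        using mult_left_mono[of v 1 "\<bar>u\<bar>"] that by simp
      show "norm (X' x * (1 - Fm x)) \<le> norm (B * indicator {a..b} x :: real)"
        using XB B0 Fm_bounds[of x] hlp[of "X x" "1 - Fm x"]
        by (auto simp: X'_def indicator_def abs_mult)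
    qed
  qed
  have T1: "integral\<^sup>L P (\<lambda>t. t * X t) = integral\<^sup>L lborel (\<lambda>t. g t * (t * X t))"
    and T1i: "integrable lborel (\<lambda>t. g t * (t * X t))"
    using transfer[OF tXm] tXint by auto
  have "integral\<^sup>L P (\<lambda>t. t * X t - (LINT z:{a..t}|lborel. X z))
      = integral\<^sup>L P (\<lambda>t. t * X t) - integral\<^sup>L P (\<lambda>t. LINT z:{a..t}|lborel. X z)"
    using tXint Iint by simp
  also have "integral\<^sup>L P (\<lambda>t. LINT z:{a..t}|lborel. X z) = (\<integral>t. \<integral>z. K (t, z) \<partial>lborel \<partial>P)"
    by (rule Bochner_Integration.integral_cong[OF refl Ieq])
  also have "\<dots> = (\<integral>z. \<integral>t. K (t, z) \<partial>P \<partial>lborel)"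
    using PLi.Fubini_integral[of "\<lambda>t z. K (t, z)"] Kint by simp
  also have "\<dots> = (\<integral>z. X' z * (1 - Fm z) \<partial>lborel)" by (simp add: inner)
  also note T1
  also have "integral\<^sup>L lborel (\<lambda>t. g t * (t * X t)) - (\<integral>z. X' z * (1 - Fm z) \<partial>lborel)
      = integral\<^sup>L lborel (\<lambda>t. g t * (t * X t) - X' t * (1 - Fm t))"
    using T1i int2 by simp
  also have "\<dots> = integral\<^sup>L lborel (\<lambda>t. g t * (X t * phi t))"
  proof (rule Bochner_Integration.integral_cong[OF refl])
    fix t :: real
    show "g t * (t * X t) - X' t * (1 - Fm t) = g t * (X t * phi t)"
    proof (cases "t \<in> {a..b}")
      case True
      then have "f t \<noteq> 0" using f_pos by force
      then show ?thesis using True by (simp add: g_def X'_def phi_eq field_simps)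
    qed (simp add: g_def X'_def)
  qed
  also have "\<dots> = integral\<^sup>L P (\<lambda>t. X t * phi t)"
    using transfer[of "\<lambda>t. X t * phi t"] Xm phi_meas by simp
  finally show ?thesis .
qed

lemma phi_fst_int: "integrable (P \<Otimes>\<^sub>M P) (\<lambda>w. phi (fst w))"
proof -
  interpret PPi: pair_sigma_finite P P by (rule PP)
  interpret p: prob_space P by (rule prob)
  show ?thesis
  proof (rule PPi.Fubini_integrable)
    show "(\<lambda>w. phi (fst w)) \<in> borel_measurable (P \<Otimes>\<^sub>M P)" by measurable
    show "integrable P (\<lambda>x. \<integral>y. norm (phi (fst (x, y))) \<partial>P)"
      using phi_int by simp
    show "AE x in P. integrable P (\<lambda>y. phi (fst (x, y)))" by simp
  qed
qed

lemma L2: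
  fixes xi :: "real \<Rightarrow> real \<Rightarrow> real"
  assumes xm[measurable]: "(\<lambda>w. xi (fst w) (snd w)) \<in> borel_measurable (P \<Otimes>\<^sub>M P)"
    and xB: "\<forall>t\<in>{a..b}. \<forall>s\<in>{a..b}. \<bar>xi t s\<bar> \<le> B"
  shows "integrable (P \<Otimes>\<^sub>M P) (\<lambda>w. xi (fst w) (snd w) * phi (fst w))"
    and "integral\<^sup>L P (\<lambda>t. (\<integral>s. xi t s \<partial>P) * phi t)
         = integral\<^sup>L (P \<Otimes>\<^sub>M P) (\<lambda>w. xi (fst w) (snd w) * phi (fst w))"
proof -
  interpret PPi: pair_sigma_finite P P by (rule PP)
  show I: "integrable (P \<Otimes>\<^sub>M P) (\<lambda>w. xi (fst w) (snd w) * phi (fst w))"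
  proof (rule Bochner_Integration.integrable_bound[of _ "\<lambda>w. B * phi (fst w)"])
    show "integrable (P \<Otimes>\<^sub>M P) (\<lambda>w. B * phi (fst w))"
      using phi_fst_int by simp
    show "(\<lambda>w. xi (fst w) (snd w) * phi (fst w)) \<in> borel_measurable (P \<Otimes>\<^sub>M P)" by measurable
    show "AE w in P \<Otimes>\<^sub>M P. norm (xi (fst w) (snd w) * phi (fst w)) \<le> norm (B * phi (fst w))"
      using xB by (intro AE_I2) (force simp: space_pair_measure space_P abs_mult intro!: mult_right_mono)
  qed
  have "integral\<^sup>L P (\<lambda>t. (\<integral>s. xi t s \<partial>P) * phi t) = (\<integral>t. \<integral>s. xi t s * phi t \<partial>P \<partial>P)"
    by simp
  also have "\<dots> = integral\<^sup>L (P \<Otimes>\<^sub>M P) (\<lambda>w. xi (fst w) (snd w) * phi (fst w))"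
    using PPi.integral_fst'[OF I] by simp
  finally show "integral\<^sup>L P (\<lambda>t. (\<integral>s. xi t s \<partial>P) * phi t)
         = integral\<^sup>L (P \<Otimes>\<^sub>M P) (\<lambda>w. xi (fst w) (snd w) * phi (fst w))" .
qed

lemma xmeas:
  assumes "(\<lambda>(t, t'). xi t t') \<in> borel_measurable (restrict_space borel {a..b} \<Otimes>\<^sub>M restrict_space borel {a..b})"
  shows "(\<lambda>w. xi (fst w) (snd w)) \<in> borel_measurable (P \<Otimes>\<^sub>M P)"
proof -
  have e: "sets (P \<Otimes>\<^sub>M P) = sets (restrict_space borel {a..b} \<Otimes>\<^sub>M restrict_space borel {a..b})"
    by (rule sets_pair_measure_cong[OF sets_P sets_P])
  show ?thesis using assms by (simp add: measurable_cong_sets[OF e refl] split_beta')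
qed

lemma interim_props:
  fixes xi :: "real \<Rightarrow> real \<Rightarrow> real"
  assumes xm[measurable]: "(\<lambda>w. xi (fst w) (snd w)) \<in> borel_measurable (P \<Otimes>\<^sub>M P)"
    and xB: "\<forall>t\<in>{a..b}. \<forall>s\<in>{a..b}. \<bar>xi t s\<bar> \<le> B"
  shows "(\<lambda>t. \<integral>s. xi t s \<partial>P) \<in> borel_measurable P"
    and "\<forall>t\<in>{a..b}. \<bar>\<integral>s. xi t s \<partial>P\<bar> \<le> B"
proof -
  interpret p: prob_space P by (rule prob)
  have cm: "case_prod xi \<in> borel_measurable (P \<Otimes>\<^sub>M P)" using xm by (simp add: split_beta')
  show "(\<lambda>t. \<integral>s. xi t s \<partial>P) \<in> borel_measurable P"
    using p.borel_measurable_lebesgue_integral[of xi P] cm by simp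
  show "\<forall>t\<in>{a..b}. \<bar>\<integral>s. xi t s \<partial>P\<bar> \<le> B"
  proof
    fix t assume t: "t \<in> {a..b}"
    have m: "xi t \<in> borel_measurable P"
      using measurable_Pair2[OF cm, of t] t space_P by simp
    have i: "integrable P (xi t)"
      by (rule p.integrable_const_bound[where B=B]) (use xB t m in \<open>auto simp: space_P\<close>)
    have "(\<integral>s. xi t s \<partial>P) \<le> B"
      by (rule p.integral_le_const[OF i]) (use xB t in \<open>force intro!: AE_I2 simp: space_P\<close>)
    moreover have "-B \<le> (\<integral>s. xi t s \<partial>P)"
      by (rule p.integral_ge_const[OF i]) (use xB t in \<open>force intro!: AE_I2 simp: space_P\<close>)
    ultimately show "\<bar>\<integral>s. xi t s \<partial>P\<bar> \<le> B" by simp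
  qed
qed

definition V :: "(nat \<Rightarrow> real \<Rightarrow> real \<Rightarrow> real) \<Rightarrow> real \<times> real \<Rightarrow> real" where
  "V x w = x 1 (fst w) (snd w) * phi (fst w) + x 2 (snd w) (fst w) * phi (snd w)"

lemma rev_repr:
  assumes "allocation_rule a b x"
  shows "revenue a P x = integral\<^sup>L (P \<Otimes>\<^sub>M P) (V x)" and "integrable (P \<Otimes>\<^sub>M P) (V x)"
proof -
  interpret PPi: pair_sigma_finite P P by (rule PP)
  have each: "\<exists>B. (\<lambda>w. x i (fst w) (snd w)) \<in> borel_measurable (P \<Otimes>\<^sub>M P)
      \<and> (\<forall>t\<in>{a..b}. \<forall>s\<in>{a..b}. \<bar>x i t s\<bar> \<le> B)" if "i \<in> {1,2}" for i
    using assms that unfolding allocation_rule_def by (auto intro: xmeas)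
  have rep: "(\<integral>t. (t * interim P x i t - (LINT z:{a..t}|lborel. interim P x i z)) \<partial>P)
      = integral\<^sup>L (P \<Otimes>\<^sub>M P) (\<lambda>w. x i (fst w) (snd w) * phi (fst w))
      \<and> integrable (P \<Otimes>\<^sub>M P) (\<lambda>w. x i (fst w) (snd w) * phi (fst w))" if i12: "i \<in> {1,2}" for i
  proof -
    obtain B where m: "(\<lambda>w. x i (fst w) (snd w)) \<in> borel_measurable (P \<Otimes>\<^sub>M P)"
      and B: "\<forall>t\<in>{a..b}. \<forall>s\<in>{a..b}. \<bar>x i t s\<bar> \<le> B" using each[OF i12] by blast
    note ip = interim_props[OF m B]
    have "(\<integral>t. (t * interim P x i t - (LINT z:{a..t}|lborel. interim P x i z)) \<partial>P)
        = integral\<^sup>L P (\<lambda>t. interim P x i t * phi t)"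
      using L1[of "interim P x i" B] ip unfolding interim_def by simp
    also have "\<dots> = integral\<^sup>L (P \<Otimes>\<^sub>M P) (\<lambda>w. x i (fst w) (snd w) * phi (fst w))"
      using L2[OF m B] unfolding interim_def by simp
    finally show ?thesis using L2(1)[OF m B] by simp
  qed
  obtain B2 where m2: "(\<lambda>w. x 2 (fst w) (snd w)) \<in> borel_measurable (P \<Otimes>\<^sub>M P)"
    using each[of 2] by blast
  have sw: "integral\<^sup>L (P \<Otimes>\<^sub>M P) (\<lambda>w. x 2 (fst w) (snd w) * phi (fst w))
      = integral\<^sup>L (P \<Otimes>\<^sub>M P) (\<lambda>w. x 2 (snd w) (fst w) * phi (snd w))"
  proof -
    have fm: "(\<lambda>w. x 2 (fst w) (snd w) * phi (fst w)) \<in> borel_measurable (P \<Otimes>\<^sub>M P)"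
      using m2 by measurable
    show ?thesis using PPi.integral_product_swap[OF fm] by (simp add: split_beta')
  qed
  have swi: "integrable (P \<Otimes>\<^sub>M P) (\<lambda>w. x 2 (snd w) (fst w) * phi (snd w))"
    using PPi.integrable_product_swap_iff[of "\<lambda>w. x 2 (fst w) (snd w) * phi (fst w)"] rep[of 2]
    by (simp add: split_beta')
  have "revenue a P x = integral\<^sup>L (P \<Otimes>\<^sub>M P) (\<lambda>w. x 1 (fst w) (snd w) * phi (fst w))
      + integral\<^sup>L (P \<Otimes>\<^sub>M P) (\<lambda>w. x 2 (snd w) (fst w) * phi (snd w))"
    unfolding revenue_def using rep[of 1] rep[of 2] sw by simp
  also have "\<dots> = integral\<^sup>L (P \<Otimes>\<^sub>M P) (V x)"
    unfolding V_def using rep[of 1] swi by (subst Bochner_Integration.integral_add) auto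
  finally show "revenue a P x = integral\<^sup>L (P \<Otimes>\<^sub>M P) (V x)" .
  show "integrable (P \<Otimes>\<^sub>M P) (V x)" unfolding V_def using rep[of 1] swi by auto
qed

lemma fst_P[measurable]: "(\<lambda>w. fst w) \<in> borel_measurable (P \<Otimes>\<^sub>M M)"
  using measurable_comp[OF measurable_fst id_meas] by (simp add: o_def)

lemma snd_P[measurable]: "(\<lambda>w. snd w) \<in> borel_measurable (M \<Otimes>\<^sub>M P)"
  using measurable_comp[OF measurable_snd id_meas] by (simp add: o_def)

lemma fst_R[measurable]: "(\<lambda>w. fst w) \<in> borel_measurable (restrict_space borel A \<Otimes>\<^sub>M M)"
  using measurable_comp[OF measurable_fst measurable_restrict_space1[OF measurable_ident_sets[OF refl]]]
  by (simp add: o_def)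

lemma snd_R[measurable]: "(\<lambda>w. snd w) \<in> borel_measurable (M \<Otimes>\<^sub>M restrict_space borel A)"
  using measurable_comp[OF measurable_snd measurable_restrict_space1[OF measurable_ident_sets[OF refl]]]
  by (simp add: o_def)

abbreviation r where "r \<equiv> reserve a b F f"

lemma r_props: "a \<le> r" "r \<le> b"
  "\<And>t. t \<in> {a..b} \<Longrightarrow> r < t \<Longrightarrow> 0 < phi t"
  "\<And>t. t \<in> {a..b} \<Longrightarrow> t < r \<Longrightarrow> phi t < 0"
proof -
  define A where "A = {a} \<union> {t\<in>{a..b}. phi t \<le> 0}"
  have r: "r = Sup A" unfolding A_def reserve_def by simp
  have ne: "A \<noteq> {}" and bdd: "bdd_above A" unfolding A_def using ab
    by (auto intro!: bdd_aboveI[where M=b])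
  show "a \<le> r" unfolding r by (rule cSup_upper[OF _ bdd]) (simp add: A_def)
  show "r \<le> b" unfolding r by (rule cSup_least[OF ne]) (use ab in \<open>auto simp: A_def\<close>)
  show "0 < phi t" if "t \<in> {a..b}" "r < t" for t
  proof (rule ccontr)
    assume "\<not> 0 < phi t"
    then have "t \<in> A" using that by (auto simp: A_def)
    then have "t \<le> r" unfolding r by (rule cSup_upper[OF _ bdd])
    then show False using that by simp
  qed
  show "phi t < 0" if tt: "t \<in> {a..b}" "t < r" for t
  proof -
    obtain t0 where "t0 \<in> A" "t < t0" using tt(2) less_cSup_iff[OF ne bdd] r by auto
    then have t0: "t0 \<in> {a..b}" "phi t0 \<le> 0" using tt(1) by (auto simp: A_def)
    have "phi t < phi t0" using phi_mono tt(1) t0(1) \<open>t < t0\<close>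
      by (auto simp: strict_mono_on_def)
    then show ?thesis using t0 by simp
  qed
qed

definition Mx :: "real \<times> real \<Rightarrow> real" where
  "Mx w = max 0 (max (phi (fst w)) (phi (snd w)))"

lemma phi_lt: "t \<in> {a..b} \<Longrightarrow> s \<in> {a..b} \<Longrightarrow> s < t \<Longrightarrow> phi s < phi t"
  using phi_mono by (auto simp: strict_mono_on_def)

lemma V_star_eq:
  assumes "t \<in> {a..b}" "s \<in> {a..b}" "t \<noteq> s" "t \<noteq> r" "s \<noteq> r"
  shows "V (x_star r) (t, s) = Mx (t, s)"
proof (cases "s < t")
  case True
  show ?thesis
  proof (cases "r < t")
    case True
    then show ?thesis using \<open>s < t\<close> r_props(3)[of t] phi_lt[of t s] assms
      by (auto simp: V_def Mx_def x_star_def)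
  next
    case False
    then show ?thesis using \<open>s < t\<close> r_props(4)[of t] phi_lt[of t s] assms
      by (auto simp: V_def Mx_def x_star_def)
  qed
next
  case False
  then have "t < s" using assms by simp
  show ?thesis
  proof (cases "r < s")
    case True
    then show ?thesis using \<open>t < s\<close> r_props(3)[of s] phi_lt[of s t] assms
      by (auto simp: V_def Mx_def x_star_def)
  next
    case False
    then show ?thesis using \<open>t < s\<close> r_props(4)[of s] phi_lt[of s t] assms
      by (auto simp: V_def Mx_def x_star_def)
  qed
qed

lemma V_le:
  assumes "allocation_rule a b x" "t \<in> {a..b}" "s \<in> {a..b}"
  shows "V x (t, s) \<le> Mx (t, s)"
proof -
  have x: "0 \<le> x 1 t s" "0 \<le> x 2 s t" "x 1 t s + x 2 s t \<le> 1"
    using assms unfolding allocation_rule_def by auto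
  define m where "m = Mx (t, s)"
  have m0: "0 \<le> m" and m1: "phi t \<le> m" and m2: "phi s \<le> m" by (auto simp: m_def Mx_def)
  have "x 1 t s * phi t \<le> x 1 t s * m" using x(1) m1 by (rule mult_left_mono[rotated])
  moreover have "x 2 s t * phi s \<le> x 2 s t * m" using x(2) m2 by (rule mult_left_mono[rotated])
  moreover have "(x 1 t s + x 2 s t) * m \<le> 1 * m" using x(3) m0 by (rule mult_right_mono)
  ultimately show ?thesis unfolding V_def m_def[symmetric] by (simp add: algebra_simps)
qed

lemma Mx_int: "integrable (P \<Otimes>\<^sub>M P) Mx"
proof -
  interpret PPi: pair_sigma_finite P P by (rule PP)
  have i2: "integrable (P \<Otimes>\<^sub>M P) (\<lambda>w. phi (snd w))"
    using PPi.integrable_product_swap_iff[of "\<lambda>w. phi (fst w)"] phi_fst_int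
    by (simp add: split_beta')
  show ?thesis
  proof (rule Bochner_Integration.integrable_bound[of _ "\<lambda>w. \<bar>phi (fst w)\<bar> + \<bar>phi (snd w)\<bar>"])
    show "integrable (P \<Otimes>\<^sub>M P) (\<lambda>w. \<bar>phi (fst w)\<bar> + \<bar>phi (snd w)\<bar>)"
      using phi_fst_int i2 by auto
    show "Mx \<in> borel_measurable (P \<Otimes>\<^sub>M P)" unfolding Mx_def by measurable
    show "AE x in P \<Otimes>\<^sub>M P. norm (Mx x) \<le> norm (\<bar>phi (fst x)\<bar> + \<bar>phi (snd x)\<bar>)"
      by (intro AE_I2) (auto simp: Mx_def)
  qed
qed

lemma AE_neq: "AE s in P. s \<noteq> c"
proof (cases "c \<in> {a..b}")
  case True
  have "{c} \<in> sets P" using True by (simp add: sets_P sets_restrict_space_iff)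
  then have "{c} \<in> null_sets P"
    using point0[of c] finite_measure.emeasure_eq_measure[OF fmP] by (simp add: null_sets_def)
  then show ?thesis by (rule AE_I') auto
next
  case False
  then show ?thesis by (intro AE_I2) (auto simp: space_P)
qed

lemma V_star_AE: "AE w in P \<Otimes>\<^sub>M P. V (x_star r) w = Mx w"
proof -
  interpret PPi: pair_sigma_finite P P by (rule PP)
  have "AE w in P \<Otimes>\<^sub>M P. fst w \<noteq> snd w \<and> fst w \<noteq> r \<and> snd w \<noteq> r"
  proof (rule PPi.AE_pair_measure)
    show "{w \<in> space (P \<Otimes>\<^sub>M P). fst w \<noteq> snd w \<and> fst w \<noteq> r \<and> snd w \<noteq> r} \<in> sets (P \<Otimes>\<^sub>M P)"
      by measurable
    show "AE t in P. AE s in P. fst (t, s) \<noteq> snd (t, s) \<and> fst (t, s) \<noteq> r \<and> snd (t, s) \<noteq> r"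
      using AE_neq[of r]
    proof eventually_elim
      case (elim t)
      show ?case using AE_neq[of t] AE_neq[of r] by eventually_elim (use elim in auto)
    qed
  qed
  then show ?thesis
    by (rule AE_mp) (intro AE_I2, auto simp: space_pair_measure space_P intro!: V_star_eq)
qed

lemma x_star_meas: "(\<lambda>(t, t'). x_star c i t t') \<in> borel_measurable (restrict_space borel {a..b} \<Otimes>\<^sub>M restrict_space borel {a..b})"
  unfolding x_star_def by measurable

lemma x_star_alloc: "allocation_rule a b (x_star c)"
  unfolding allocation_rule_def
proof (intro conjI ballI)
  fix i :: nat assume "i \<in> {1,2}"
  show "(\<lambda>(t, t'). x_star c i t t') \<in> borel_measurable (restrict_space borel {a..b} \<Otimes>\<^sub>M restrict_space borel {a..b})"
    by (rule x_star_meas)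
  show "\<exists>B. \<forall>t\<in>{a..b}. \<forall>t'\<in>{a..b}. \<bar>x_star c i t t'\<bar> \<le> B"
    by (rule exI[of _ 1]) (auto simp: x_star_def)
next
  fix t t' assume "t \<in> {a..b}" "t' \<in> {a..b}"
  show "0 \<le> x_star c 1 t t'" "0 \<le> x_star c 2 t' t" "x_star c 1 t t' + x_star c 2 t' t \<le> 1"
    by (auto simp: x_star_def)
qed

lemma id_R[measurable]: "(\<lambda>s. s) \<in> borel_measurable (restrict_space borel A)"
  by (rule measurable_restrict_space1[OF measurable_ident_sets[OF refl]])

lemma x_star_s_meas: "(\<lambda>s. x_star c i t s) \<in> borel_measurable P"
proof -
  have e: "(\<lambda>s. x_star c i t s) = (\<lambda>s. if c \<le> t then (if s < t then 1 else if s = t then 1/2 else 0) else 0)"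
    by (auto simp: x_star_def fun_eq_iff)
  have "(\<lambda>s. x_star c i t s) \<in> borel_measurable (restrict_space borel {a..b})"
    unfolding e by (cases "c \<le> t") simp_all
  then show ?thesis by (simp add: measurable_cong_sets[OF sets_P refl])
qed

lemma x_star_int:
  assumes sQ: "sets Q = sets P" and fQ: "finite_measure Q"
  shows "integrable Q (\<lambda>s. x_star c i t s)"
proof (rule finite_measure.integrable_const_bound[OF fQ, where B=1])
  show "AE s in Q. norm (x_star c i t s) \<le> 1" by (intro AE_I2) (simp add: x_star_def)
  show "(\<lambda>s. x_star c i t s) \<in> borel_measurable Q"
    unfolding measurable_cong_sets[OF sQ refl] by (rule x_star_s_meas)
qed

lemma F_lt1:
  assumes t: "t \<in> {a..b}" "t < b"
  shows "measure P {a..t} < 1"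
proof -
  have s1: "{a..t} \<in> sets P" "{t<..b} \<in> sets P"
    using t by (auto simp: sets_P sets_restrict_space_iff)
  have d: "{a..t} \<inter> {t<..b} = {}" by auto
  have u: "{a..t} \<union> {t<..b} = {a..b}" using t by auto
  have sum1: "measure P {a..t} + measure P {t<..b} = 1"
    using finite_measure.finite_measure_Union[OF fmP s1 d] u prob_space.prob_space[OF prob] space_P
    by simp
  have im: "indicator {t<..b} \<in> borel_measurable P" using s1 by simp
  have "measure P {t<..b} = integral\<^sup>L P (indicator {t<..b})"
    using s1 finite_measure.emeasure_finite[OF fmP] by (simp add: less_top)
  also have "\<dots> = integral\<^sup>L lborel (\<lambda>x. g x * indicator {t<..b} x)"
    using transfer[OF im] by simp
  finally have meq: "measure P {t<..b} = integral\<^sup>L lborel (\<lambda>x. g x * indicator {t<..b} x)" .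
  have iint: "integrable lborel (\<lambda>x. g x * indicator {t<..b} x)"
    using transfer[OF im] s1 finite_measure.emeasure_finite[OF fmP] by (simp add: less_top)
  have "measure P {t<..b} \<noteq> 0"
  proof
    assume "measure P {t<..b} = 0"
    then have "AE x in lborel. g x * indicator {t<..b} x = 0"
      using integral_nonneg_eq_0_iff_AE[OF iint] g_nonneg meq by simp
    then have "AE x in lborel. x \<notin> {t<..b}"
    proof (rule AE_mp, intro AE_I2 impI)
      fix x assume h: "g x * indicator {t<..b} x = 0"
      show "x \<notin> {t<..b}"
      proof
        assume xin: "x \<in> {t<..b}"
        then have "x \<in> {a..b}" using t by auto
        then have "0 < f x" using f_pos by auto
        moreover have "g x = f x" using \<open>x \<in> {a..b}\<close> by (simp add: g_def)
        moreover have "indicator {t<..b} x = (1::real)" using xin by simp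
        ultimately show False using h by simp
      qed
    qed
    moreover have ss: "{x \<in> space lborel. \<not> x \<notin> {t<..b}} = {t<..b}" by auto
    then have "(AE x in lborel. x \<notin> {t<..b}) = (emeasure lborel {t<..b} = 0)"
      by (rule AE_iff_measurable[rotated]) simp
    ultimately have "emeasure lborel {t<..b} = 0" by blast
    then show False using t by simp
  qed
  then show ?thesis using sum1 measure_nonneg[of P "{t<..b}"] by linarith
qed

lemma x_star_X: "assumption_X a b P \<eta> (x_star r)"
  unfolding assumption_X_def
proof (rule ballI, intro conjI)
  fix i :: nat assume "i \<in> {1,2}"
  show "\<forall>t\<in>{a..b}. \<forall>t'\<in>{a..b}. t' \<noteq> t \<longrightarrow> x_star r i t t' \<in> {0, 1}"
    by (auto simp: x_star_def)
  show "\<forall>t\<in>{a..b}. interim P (x_star r) i t = 1 \<longrightarrow> t = b"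
  proof (intro ballI impI)
    fix t assume t: "t \<in> {a..b}" and i1: "interim P (x_star r) i t = 1"
    show "t = b"
    proof (rule ccontr)
      assume "t \<noteq> b"
      then have tb: "t < b" using t by simp
      have s1: "{a..t} \<in> sets P" using t by (auto simp: sets_P sets_restrict_space_iff)
      have "interim P (x_star r) i t \<le> integral\<^sup>L P (indicator {a..t})"
        unfolding interim_def
      proof (rule Bochner_Integration.integral_mono)
        show "integrable P (x_star r i t)" using x_star_int[OF refl fmP] by simp
        show "integrable P (indicator {a..t} :: real \<Rightarrow> real)"
          using s1 finite_measure.emeasure_finite[OF fmP] by (simp add: less_top)
        show "x_star r i t s \<le> indicator {a..t} s" if "s \<in> space P" for s
          using that by (auto simp: x_star_def indicator_def space_P)
      qed
      also have "\<dots> = measure P {a..t}"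
        using s1 finite_measure.emeasure_finite[OF fmP] by (simp add: less_top)
      also have "\<dots> < 1" by (rule F_lt1[OF t tb])
      finally show False using i1 by simp
    qed
  qed
  show "mono_on {a..b} (interim_min P \<eta> (x_star r) i)"
  proof (rule mono_onI)
    fix t t' assume tt: "t \<in> {a..b}" "t' \<in> {a..b}" "t \<le> t'"
    define C where "C Q \<longleftrightarrow> sets Q = sets P \<and> prob_space Q \<and> contamination_div Q P \<le> ereal \<eta>"
      for Q :: "real measure"
    have pw: "x_star r i t s \<le> x_star r i t' s" for s
      using tt(3) by (auto simp: x_star_def)
    show "interim_min P \<eta> (x_star r) i t \<le> interim_min P \<eta> (x_star r) i t'"
    proof (cases "\<exists>Q. C Q")
      case False
      then have "{\<integral>s. x_star r i t s \<partial>Q |Q. C Q} = {}" "{\<integral>s. x_star r i t' s \<partial>Q |Q. C Q} = {}"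
        by auto
      then show ?thesis unfolding interim_min_def C_def[symmetric] by simp
    next
      case True
      then obtain Q0 where "C Q0" by blast
      show ?thesis unfolding interim_min_def C_def[symmetric]
      proof (rule cInf_mono)
        show "{\<integral>s. x_star r i t' s \<partial>Q |Q. C Q} \<noteq> {}" using \<open>C Q0\<close> by blast
        show "bdd_below {\<integral>s. x_star r i t s \<partial>Q |Q. C Q}"
          by (rule bdd_belowI[where m=0]) (auto intro!: Bochner_Integration.integral_nonneg simp: x_star_def)
        fix v assume "v \<in> {\<integral>s. x_star r i t' s \<partial>Q |Q. C Q}"
        then obtain Q where Q: "C Q" and v: "v = (\<integral>s. x_star r i t' s \<partial>Q)" by blast
        have fQ: "finite_measure Q" using Q unfolding C_def by (auto intro: prob_space.finite_measure)
        have sQ: "sets Q = sets P" using Q unfolding C_def by simp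
        have "(\<integral>s. x_star r i t s \<partial>Q) \<le> v"
          unfolding v
          by (rule Bochner_Integration.integral_mono[OF x_star_int[OF sQ fQ] x_star_int[OF sQ fQ] pw])
        then show "\<exists>u\<in>{\<integral>s. x_star r i t s \<partial>Q |Q. C Q}. u \<le> v" using Q by blast
      qed
    qed
  qed
qed

end

theorem proposition5:
  fixes a b \<eta> :: real and P :: "real measure" and f :: "real \<Rightarrow> real"
  assumes "0 < a" and "a < b"
    and "sets P = sets (restrict_space borel {a..b})"
    and "prob_space P"
    and "atomless P"
    and "0 < \<eta>" and "\<eta> < 1"
    and "set_integrable lborel {a..b} f"
    and "\<forall>t\<in>{a..b}. 0 < f t"
    and "\<forall>t\<in>{a..b}. measure P {a..t} = (LINT z:{a..t}|lborel. f z)"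
    and "strict_mono_on {a..b} (virtual_value (\<lambda>t. measure P {a..t}) f)"
  shows "allocation_rule a b (x_star (reserve a b (\<lambda>t. measure P {a..t}) f))
       \<and> assumption_X a b P \<eta> (x_star (reserve a b (\<lambda>t. measure P {a..t}) f))
       \<and> (\<forall>x. allocation_rule a b x \<and> assumption_X a b P \<eta> x \<longrightarrow>
              revenue a P x \<le> revenue a P (x_star (reserve a b (\<lambda>t. measure P {a..t}) f)))"
proof -
  interpret setting a b P f
    by (rule setting.intro[OF assms(2,3,4,8,9,10,11)])
  have opt: "revenue a P x \<le> revenue a P (x_star r)"
    if al: "allocation_rule a b x" for x
  proof -
    interpret PPi: pair_sigma_finite P P by (rule PP)
    have "revenue a P x = integral\<^sup>L (P \<Otimes>\<^sub>M P) (V x)" by (rule rev_repr(1)[OF al])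
    also have "\<dots> \<le> integral\<^sup>L (P \<Otimes>\<^sub>M P) Mx"
    proof (rule Bochner_Integration.integral_mono[OF rev_repr(2)[OF al] Mx_int])
      fix w assume "w \<in> space (P \<Otimes>\<^sub>M P)"
      then show "V x w \<le> Mx w" using V_le[OF al, of "fst w" "snd w"]
        by (auto simp: space_pair_measure space_P)
    qed
    also have "\<dots> = integral\<^sup>L (P \<Otimes>\<^sub>M P) (V (x_star r))"
    proof (rule integral_cong_AE)
      show "Mx \<in> borel_measurable (P \<Otimes>\<^sub>M P)" using Mx_int by (rule borel_measurable_integrable)
      show "V (x_star r) \<in> borel_measurable (P \<Otimes>\<^sub>M P)"
        using rev_repr(2)[OF x_star_alloc] by (rule borel_measurable_integrable)
      show "AE w in P \<Otimes>\<^sub>M P. Mx w = V (x_star r) w"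
        using V_star_AE by (rule AE_mp) (intro AE_I2, simp)
    qed
    also have "\<dots> = revenue a P (x_star r)" by (rule rev_repr(1)[OF x_star_alloc, symmetric])
    finally show ?thesis .
  qed
  show ?thesis using x_star_alloc x_star_X opt by blast
qed

end
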